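(* Let $k\ge2$, $\lambda>0$, $\theta>1$ (i.e. $J<0$). Put $\theta_{\rm cr}=2\bigl(\frac{k+1}{k-1}\bigr)^2-1$. Then: (1) if $\theta\le\theta_{\rm cr}$, there is exactly one TISGM; (2) if $\theta>\theta_{\rm cr}$, the quadratic $2x^2+[4-(\theta-1)(k-1)]x+\theta+1=0$ has two distinct positive roots $x_1,x_2$, and the two numbers $\frac{2^kx_i}{(1+\theta)^{k+1}}\bigl(\frac{1+\theta+2x_i}{2(1+x_i)}\bigr)^k$, $i=1,2$, are distinct; denote them $\lambda_-<\lambda_+$. Then: (2a) if $\lambda\in(0,\lambda_-)\cup(\lambda_+,\infty)$ there is exactly one TISGM; (2b) if $\lambda\in\{\lambda_-,\lambda_+\}$ there are exactly two TISGMs; (2c) if $\lambda\in(\lambda_-,\lambda_+)$ there are exactly three TISGMs.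
   Context: The SCWR model on the Cayley tree $\mathbb{T}^k$ (each vertex has $k$ direct successors) has spins in $\{-1,0,1\}$, activity $\lambda>0$ and interaction parameter $\theta=e^{-J\beta}>0$ ($J<0$ antiferromagnetic, i.e. $\theta>1$; $J>0$ ferromagnetic, i.e. $0<\theta<1$). Translation-invariant splitting Gibbs measures (TISGMs) are in one-to-one correspondence with the solutions $(x,y)\in(0,\infty)^2$ of the system $x=\lambda\bigl(\frac{1+x+\theta y}{1+x+y}\bigr)^k$, $y=\lambda\bigl(\frac{1+\theta x+y}{1+x+y}\bigr)^k$; "the number of TISGMs" means the number of such positive solutions. *)

theory Defs
  imports "HOL-Analysis.Analysis"
begin

text \<open>Positive solutions (x,y) of the TISGM system of the SCWR model on the Cayley tree
  of order k with activity lam and interaction parameter theta.  These are in one-to-one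
  correspondence with the translation-invariant splitting Gibbs measures.\<close>
definition scwr_tisgm :: "nat \<Rightarrow> real \<Rightarrow> real \<Rightarrow> (real \<times> real) set" where
  "scwr_tisgm k lam theta = {(x, y). x > 0 \<and> y > 0 \<and>
      x = lam * ((1 + x + theta * y) / (1 + x + y)) ^ k \<and>
      y = lam * ((1 + theta * x + y) / (1 + x + y)) ^ k}"

definition num_tisgm :: "nat \<Rightarrow> real \<Rightarrow> real \<Rightarrow> nat" where
  "num_tisgm k lam theta = card (scwr_tisgm k lam theta)"

definition theta_cr :: "nat \<Rightarrow> real" where
  "theta_cr k = 2 * ((real k + 1) / (real k - 1)) ^ 2 - 1"

definition lam_crit :: "nat \<Rightarrow> real \<Rightarrow> real \<Rightarrow> real" where
  "lam_crit k theta x = 2 ^ k * x / (1 + theta) ^ (k + 1) *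
      ((1 + theta + 2 * x) / (2 * (1 + x))) ^ k"

end

theory Submission imports Defs begin

definition gg :: "nat \<Rightarrow> real \<Rightarrow> real \<Rightarrow> real" where
  "gg k a z = z * ((1 + 2*z) / (1 + a*z)) ^ k"

definition qq :: "nat \<Rightarrow> real \<Rightarrow> real \<Rightarrow> real" where
  "qq k a z = 2*a*z^2 + (a + 2 + real k * (2 - a)) * z + 1"

lemma gg_deriv:
  assumes "a > 2" "z \<ge> 0" "k \<ge> 1"
  shows "(gg k a has_real_derivative
     (((1 + 2*z) / (1 + a*z)) ^ (k - 1) / (1 + a*z)^2 * qq k a z)) (at z)"
proof -
  have v: "1 + a*z > 0" using assms by (simp add: add_pos_nonneg)
  have u: "1 + 2*z > 0" using assms by simp
  have "((\<lambda>z. z * ((1 + 2*z) / (1 + a*z)) ^ k) has_real_derivative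
     (1 * ((1 + 2*z) / (1 + a*z)) ^ k + z * (real k * ((1 + 2*z) / (1 + a*z)) ^ (k - 1) *
        ((2 * (1 + a*z) - (1 + 2*z) * a) / (1 + a*z)^2)))) (at z)"
    using v
    by (auto intro!: derivative_eq_intros simp: power2_eq_square)
  moreover have "1 * ((1 + 2*z) / (1 + a*z)) ^ k + z * (real k * ((1 + 2*z) / (1 + a*z)) ^ (k - 1) *
        ((2 * (1 + a*z) - (1 + 2*z) * a) / (1 + a*z)^2))
      = ((1 + 2*z) / (1 + a*z)) ^ (k - 1) / (1 + a*z)^2 * qq k a z"
  proof -
    obtain m where m: "k = Suc m" using assms by (cases k) auto
    define P where "P = ((1 + 2*z) / (1 + a*z)) ^ m"
    have c: "2 * (1 + a*z) - (1 + 2*z) * a = 2 - a" by (simp add: algebra_simps)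
    have q: "(1 + 2*z) * (1 + a*z) + z * real k * (2 - a) = qq k a z"
      by (simp add: qq_def algebra_simps power2_eq_square)
    have gen: "1 * (P * (u / v)) + z * (K * P * (c / v^2)) = P / v^2 * (u * v + z * K * c)"
      if "v \<noteq> 0" for u v K c :: real
      using that by (simp add: field_simps power2_eq_square)
    have "((1 + 2*z) / (1 + a*z)) ^ k = P * ((1 + 2*z) / (1 + a*z))"
      by (simp add: P_def m)
    then show ?thesis unfolding c
      using gen[of "1 + a*z" "1 + 2*z" "real k" "2 - a"] v q
      by (simp add: m P_def[symmetric] mult.assoc) (simp add: ac_simps)
  qed
  ultimately show ?thesis unfolding gg_def[abs_def] by simp
qed

lemma gg_cont: "a > 2 \<Longrightarrow> z \<ge> 0 \<Longrightarrow> k \<ge> 1 \<Longrightarrow> isCont (gg k a) z"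
  using gg_deriv DERIV_isCont by blast

lemma gg_cont_on: "a > 2 \<Longrightarrow> x \<ge> 0 \<Longrightarrow> k \<ge> 1 \<Longrightarrow> continuous_on {x..y} (gg k a)"
  by (intro continuous_at_imp_continuous_on ballI gg_cont) auto

lemma factor_pos: "(a::real) > 2 \<Longrightarrow> z \<ge> 0 \<Longrightarrow> ((1 + 2*z) / (1 + a*z)) ^ (k - 1) / (1 + a*z)^2 > 0"
proof -
  assume "a > 2" "z \<ge> 0"
  then have "a*z \<ge> 0" by simp
  then have "1 + a*z > 0" by linarith
  moreover have "1 + 2*z > 0" using \<open>z \<ge> 0\<close> by simp
  ultimately show ?thesis by simp
qed

lemma gg_inc0:
  assumes "a > 2" "k \<ge> 1" "0 \<le> x" "x < y" "\<And>z. x < z \<Longrightarrow> z < y \<Longrightarrow> qq k a z > 0"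
  shows "gg k a x < gg k a y"
proof (rule DERIV_pos_imp_increasing_open[OF assms(4)])
  fix z assume "x < z" "z < y"
  then show "\<exists>y. DERIV (gg k a) z :> y \<and> y > 0"
    using gg_deriv[of a z k] factor_pos[of a z k] assms mult_pos_pos[OF factor_pos[of a z k] assms(5)[of z]]
    by (intro exI[of _ "((1 + 2*z) / (1 + a*z)) ^ (k - 1) / (1 + a*z)^2 * qq k a z"]) auto
qed (use gg_cont_on assms in auto)

lemma gg_dec0:
  assumes "a > 2" "k \<ge> 1" "0 \<le> x" "x < y" "\<And>z. x < z \<Longrightarrow> z < y \<Longrightarrow> qq k a z < 0"
  shows "gg k a x > gg k a y"
proof (rule DERIV_neg_imp_decreasing_open[OF assms(4)])
  fix z assume "x < z" "z < y"
  then show "\<exists>y. DERIV (gg k a) z :> y \<and> y < 0"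
    using gg_deriv[of a z k] factor_pos[of a z k] assms mult_pos_neg[OF factor_pos[of a z k] assms(5)[of z]]
    by (intro exI[of _ "((1 + 2*z) / (1 + a*z)) ^ (k - 1) / (1 + a*z)^2 * qq k a z"]) auto
qed (use gg_cont_on assms in auto)

lemma gg_inc_exc:
  assumes "a > 2" "k \<ge> 1" "0 \<le> x" "x < y" "\<And>z. x < z \<Longrightarrow> z < y \<Longrightarrow> z \<noteq> c \<Longrightarrow> qq k a z > 0"
  shows "gg k a x < gg k a y"
proof (cases "x < c \<and> c < y")
  case True
  have "gg k a x < gg k a c" using assms True by (intro gg_inc0) auto
  also have "\<dots> < gg k a y" using assms True by (intro gg_inc0) auto
  finally show ?thesis .
next
  case False
  then show ?thesis using assms by (intro gg_inc0) auto
qed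

lemma gg_lower:
  assumes "a > 2" "z \<ge> 0"
  shows "gg k a z \<ge> z * (2/a)^k"
proof -
  have v: "1 + a*z > 0" using assms by (simp add: add_pos_nonneg)
  have "2/a \<le> (1 + 2*z) / (1 + a*z)"
    using assms v by (simp add: field_simps)
  then have "(2/a)^k \<le> ((1 + 2*z) / (1 + a*z))^k"
    using assms by (intro power_mono) auto
  then show ?thesis unfolding gg_def using assms by (simp add: mult_left_mono)
qed

lemma gg_unb:
  assumes "a > 2" "r \<ge> 0"
  shows "\<exists>M\<ge>r. gg k a M \<ge> y"
proof -
  define M where "M = max r (\<bar>y\<bar> * (a/2)^k)"
  have "M \<ge> r" "M \<ge> 0" using assms by (auto simp: M_def)
  have one: "(a/2)^k * (2/a)^k = 1" using assms by (simp add: power_mult_distrib[symmetric])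
  have "y \<le> \<bar>y\<bar> * (a/2)^k * (2/a)^k" using one by (simp add: mult.assoc)
  also have "\<dots> \<le> M * (2/a)^k" using assms by (intro mult_right_mono) (auto simp: M_def)
  also have "\<dots> \<le> gg k a M" using gg_lower[OF assms(1) \<open>M \<ge> 0\<close>] .
  finally show ?thesis using \<open>M \<ge> r\<close> by blast
qed

lemma gg0: "gg k a 0 = 0" by (simp add: gg_def)

lemma scwr_char:
  assumes k: "k \<ge> 1" and th: "theta > 1" and lam: "lam > 0"
  shows "scwr_tisgm k lam theta = (\<lambda>z. (z, z)) ` {z. z > 0 \<and> gg k (1 + theta) z = lam}"
proof -
  have xy: "x = y" if "(x, y) \<in> scwr_tisgm k lam theta" for x y
  proof (rule ccontr)
    assume ne: "x \<noteq> y"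
    have xp: "x > 0" and yp: "y > 0" and ex: "x = lam * ((1 + x + theta * y) / (1 + x + y)) ^ k"
      and ey: "y = lam * ((1 + theta * x + y) / (1 + x + y)) ^ k"
      using that by (auto simp: scwr_tisgm_def)
    have d: "0 < 1 + x + y" using xp yp by simp
    show False
    proof (cases "x < y")
      case True
      have "0 < (theta - 1) * (y - x)" using True th by simp
      then have "1 + theta * x + y < 1 + x + theta * y" by (simp add: algebra_simps)
      then have "(1 + theta * x + y) / (1 + x + y) < (1 + x + theta * y) / (1 + x + y)"
        using d by (intro divide_strict_right_mono) auto
      moreover have "0 \<le> (1 + theta * x + y) / (1 + x + y)" using d xp yp th by simp
      ultimately have "((1 + theta * x + y) / (1 + x + y))^k < ((1 + x + theta * y) / (1 + x + y))^k"
        using k by (intro power_strict_mono) auto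
      then have "y < x" using ex ey lam by (metis mult_strict_left_mono)
      then show False using True by simp
    next
      case False
      then have F: "y < x" using ne by simp
      have "0 < (theta - 1) * (x - y)" using F th by simp
      then have "1 + x + theta * y < 1 + theta * x + y" by (simp add: algebra_simps)
      then have "(1 + x + theta * y) / (1 + x + y) < (1 + theta * x + y) / (1 + x + y)"
        using d by (intro divide_strict_right_mono) auto
      moreover have "0 \<le> (1 + x + theta * y) / (1 + x + y)" using d xp yp th by simp
      ultimately have "((1 + x + theta * y) / (1 + x + y))^k < ((1 + theta * x + y) / (1 + x + y))^k"
        using k by (intro power_strict_mono) auto
      then have "x < y" using ex ey lam by (metis mult_strict_left_mono)
      then show False using F by simp
    qed
  qed
  have eq: "(z = lam * ((1 + z + theta * z) / (1 + z + z)) ^ k \<and>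
             z = lam * ((1 + theta * z + z) / (1 + z + z)) ^ k) \<longleftrightarrow> gg k (1 + theta) z = lam"
    if "z > 0" for z
  proof -
    define F where "F = (1 + (1 + theta) * z) / (1 + 2 * z)"
    have Fp: "F > 0" unfolding F_def using that th by (simp add: add_pos_pos)
    have F1: "(1 + z + theta * z) / (1 + z + z) = F" by (simp add: F_def algebra_simps)
    have F1': "(1 + theta * z + z) / (1 + z + z) = F" by (simp add: F_def algebra_simps)
    have F2: "(1 + 2 * z) / (1 + (1 + theta) * z) = inverse F" by (simp add: F_def)
    have G: "gg k (1 + theta) z = z * inverse F ^ k" unfolding gg_def F2 ..
    have "F ^ k * inverse F ^ k = 1" using Fp by (simp add: power_mult_distrib[symmetric])
    then show ?thesis unfolding F1 F1' G using Fp
      by (metis (no_types, lifting) mult.assoc mult.commute mult.right_neutral)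
  qed
  show ?thesis
  proof (intro equalityI subsetI)
    fix p assume p: "p \<in> scwr_tisgm k lam theta"
    obtain x y where pxy: "p = (x, y)" by (cases p)
    then have "x = y" using xy p by simp
    then have "x > 0" "x = lam * ((1 + x + theta * x) / (1 + x + x)) ^ k \<and>
             x = lam * ((1 + theta * x + x) / (1 + x + x)) ^ k" "p = (x, x)"
      using p pxy unfolding scwr_tisgm_def by auto
    then show "p \<in> (\<lambda>z. (z, z)) ` {z. z > 0 \<and> gg k (1 + theta) z = lam}"
      using eq[of x] by auto
  next
    fix p assume "p \<in> (\<lambda>z. (z, z)) ` {z. z > 0 \<and> gg k (1 + theta) z = lam}"
    then obtain z where z: "p = (z, z)" "z > 0" "gg k (1 + theta) z = lam" by auto
    then have "z = lam * ((1 + z + theta * z) / (1 + z + z)) ^ k \<and>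
             z = lam * ((1 + theta * z + z) / (1 + z + z)) ^ k" using eq[of z] by blast
    then show "p \<in> scwr_tisgm k lam theta"
      using z unfolding scwr_tisgm_def by auto
  qed
qed

lemma num_char:
  assumes "k \<ge> 1" "theta > 1" "lam > 0"
  shows "num_tisgm k lam theta = card {z. z > 0 \<and> gg k (1 + theta) z = lam}"
  unfolding num_tisgm_def scwr_char[OF assms]
  by (rule card_image) (auto simp: inj_on_def)

lemma gg_scaled:
  assumes b: "b > 0" and x: "x > 0"
  shows "gg k b (x / b) = 2 ^ k * x / b ^ (k + 1) * ((b + 2 * x) / (2 * (1 + x))) ^ k"
proof -
  define R where "R = (b + 2 * x) / (2 * (1 + x))"
  have "b + b * x > 0" "b * (1 + x) > 0" using b x by (simp_all add: add_pos_pos)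
  then have gen: "(1 + 2 * (x / b)) / (1 + b * (x / b)) = (2 / b) * R"
    unfolding R_def using b x by (simp add: field_simps)
  have "gg k b (x / b) = x / b * ((2 / b) ^ k * R ^ k)"
    unfolding gg_def gen by (simp only: power_mult_distrib)
  also have "\<dots> = 2 ^ k * x / b ^ (k + 1) * R ^ k"
    using b by (simp add: power_divide field_simps)
  finally show ?thesis unfolding R_def .
qed

lemma lam_crit_gg:
  assumes "theta > 1" "x > 0"
  shows "lam_crit k theta x = gg k (1 + theta) (x / (1 + theta))"
  unfolding lam_crit_def using gg_scaled[of "1 + theta" x k] assms by simp

lemma count_super:
  fixes g :: "real \<Rightarrow> real" and r1 r2 lam :: real
  assumes r: "0 < r1" "r1 < r2" and g0: "g 0 = 0" and lam: "lam > 0"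
    and cont: "\<And>z. z \<ge> 0 \<Longrightarrow> isCont g z"
    and I1: "\<And>u v. 0 \<le> u \<Longrightarrow> u < v \<Longrightarrow> v \<le> r1 \<Longrightarrow> g u < g v"
    and I2: "\<And>u v. r1 \<le> u \<Longrightarrow> u < v \<Longrightarrow> v \<le> r2 \<Longrightarrow> g u > g v"
    and I3: "\<And>u v. r2 \<le> u \<Longrightarrow> u < v \<Longrightarrow> g u < g v"
    and unb: "\<And>y. \<exists>M\<ge>r2. g M \<ge> y"
  defines "S \<equiv> {z. z > 0 \<and> g z = lam}"
  shows "(lam < g r2 \<or> lam > g r1 \<longrightarrow> card S = 1) \<and>
         (lam = g r2 \<or> lam = g r1 \<longrightarrow> card S = 2) \<and>
         (g r2 < lam \<and> lam < g r1 \<longrightarrow> card S = 3)"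
proof -
  have LU: "g r2 < g r1" using I2[of r1 r2] r by simp
  have U1: "u = v" if "0 \<le> u" "u \<le> r1" "0 \<le> v" "v \<le> r1" "g u = g v" for u v
    using I1[of u v] I1[of v u] that by (cases u v rule: linorder_cases) auto
  have U2: "u = v" if "r1 \<le> u" "u \<le> r2" "r1 \<le> v" "v \<le> r2" "g u = g v" for u v
    using I2[of u v] I2[of v u] that by (cases u v rule: linorder_cases) auto
  have U3: "u = v" if "r2 \<le> u" "r2 \<le> v" "g u = g v" for u v
    using I3[of u v] I3[of v u] that by (cases u v rule: linorder_cases) auto
  have M1: "g z \<le> g r1" if "0 \<le> z" "z \<le> r1" for z
    using I1[of z r1] that by (cases "z = r1") auto
  have M2a: "g z \<le> g r1" if "r1 \<le> z" "z \<le> r2" for z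
    using I2[of r1 z] that by (cases "z = r1") auto
  have M2b: "g z \<ge> g r2" if "r1 \<le> z" "z \<le> r2" for z
    using I2[of z r2] that by (cases "z = r2") auto
  have M3: "g z \<ge> g r2" if "r2 \<le> z" for z
    using I3[of r2 z] that by (cases "z = r2") auto
  have E1: "\<exists>z. 0 < z \<and> z \<le> r1 \<and> g z = lam" if h: "lam \<le> g r1"
  proof -
    have c1: "\<forall>x. 0 \<le> x \<and> x \<le> r1 \<longrightarrow> isCont g x" using cont by blast
    have "g 0 \<le> lam" using g0 lam by simp
    from IVT[OF this h _ c1] r obtain z where z: "0 \<le> z" "z \<le> r1" "g z = lam" by auto
    have "z \<noteq> 0" using z g0 lam by auto
    then have "0 < z" using z by linarith
    then show ?thesis using z by blast
  qed
  have E2: "\<exists>z. r1 \<le> z \<and> z \<le> r2 \<and> g z = lam" if h1: "g r2 \<le> lam" and h2: "lam \<le> g r1"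
  proof -
    have c2: "\<forall>x. r1 \<le> x \<and> x \<le> r2 \<longrightarrow> isCont g x" using cont r by auto
    have "r1 \<le> r2" using r by simp
    from IVT2[OF h1 h2 this c2] show ?thesis by blast
  qed
  have E3: "\<exists>z. r2 \<le> z \<and> g z = lam" if h: "g r2 \<le> lam"
  proof -
    obtain M where M: "M \<ge> r2" "g M \<ge> lam" using unb by blast
    have c3: "\<forall>x. r2 \<le> x \<and> x \<le> M \<longrightarrow> isCont g x" using cont r by auto
    from IVT[OF h M(2) M(1) c3] show ?thesis by blast
  qed
  have reg: "z \<le> r1 \<or> (r1 \<le> z \<and> z \<le> r2) \<or> r2 \<le> z" for z :: real by linarith
  have reg3: "P" if "z \<le> r1 \<Longrightarrow> P" "r1 \<le> z \<Longrightarrow> z \<le> r2 \<Longrightarrow> P" "r2 \<le> z \<Longrightarrow> P" for z :: real and P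
    using that by linarith
  have c1: "card S = 1" if h: "lam < g r2"
  proof -
    obtain z1 where z1: "0 < z1" "z1 \<le> r1" "g z1 = lam" using E1 h LU by force
    have "S = {z1}"
    proof
      show "{z1} \<subseteq> S" using z1 by (simp add: S_def)
      show "S \<subseteq> {z1}"
      proof
        fix z assume "z \<in> S"
        then have z: "0 < z" "g z = lam" by (auto simp: S_def)
        have "z = z1"
        proof (rule reg3[of z])
          assume "z \<le> r1" then show "z = z1" using U1[of z z1] z z1 by simp
        next
          assume "r1 \<le> z" "z \<le> r2" then show "z = z1" using M2b[of z] z h by simp
        next
          assume "r2 \<le> z" then show "z = z1" using M3[of z] z h by simp
        qed
        then show "z \<in> {z1}" by simp
      qed
    qed
    then show ?thesis by simp
  qed
  have c2: "card S = 1" if h: "lam > g r1"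
  proof -
    obtain z1 where z1: "r2 \<le> z1" "g z1 = lam" using E3 h LU by force
    have z1p: "0 < z1" using z1 r by linarith
    have "S = {z1}"
    proof
      show "{z1} \<subseteq> S" using z1 z1p by (simp add: S_def)
      show "S \<subseteq> {z1}"
      proof
        fix z assume "z \<in> S"
        then have z: "0 < z" "g z = lam" by (auto simp: S_def)
        have "z = z1"
        proof (rule reg3[of z])
          assume "z \<le> r1" then show "z = z1" using M1[of z] z h by simp
        next
          assume "r1 \<le> z" "z \<le> r2" then show "z = z1" using M2a[of z] z h by simp
        next
          assume "r2 \<le> z" then show "z = z1" using U3[of z z1] z z1 by simp
        qed
        then show "z \<in> {z1}" by simp
      qed
    qed
    then show ?thesis by simp
  qed
  have c3: "card S = 2" if h: "lam = g r2"
  proof -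
    obtain z1 where z1: "0 < z1" "z1 \<le> r1" "g z1 = lam" using E1 h LU by force
    have r2p: "0 < r2" using r by linarith
    have "S = {z1, r2}"
    proof
      show "{z1, r2} \<subseteq> S" using z1 r2p h by (simp add: S_def)
      show "S \<subseteq> {z1, r2}"
      proof
        fix z assume "z \<in> S"
        then have z: "0 < z" "g z = lam" by (auto simp: S_def)
        have "z = z1 \<or> z = r2"
        proof (rule reg3[of z])
          assume "z \<le> r1" then show ?thesis using U1[of z z1] z z1 by simp
        next
          assume "r1 \<le> z" "z \<le> r2" then show ?thesis using U2[of z r2] z h r by simp
        next
          assume "r2 \<le> z" then show ?thesis using U3[of z r2] z h by simp
        qed
        then show "z \<in> {z1, r2}" by blast
      qed
    qed
    moreover have "z1 \<noteq> r2" using z1 r by linarith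
    ultimately show ?thesis by simp
  qed
  have c4: "card S = 2" if h: "lam = g r1"
  proof -
    obtain z1 where z1: "r2 \<le> z1" "g z1 = lam" using E3 h LU by force
    have z1p: "0 < z1" using z1 r by linarith
    have "S = {r1, z1}"
    proof
      show "{r1, z1} \<subseteq> S" using z1 z1p h r by (simp add: S_def)
      show "S \<subseteq> {r1, z1}"
      proof
        fix z assume "z \<in> S"
        then have z: "0 < z" "g z = lam" by (auto simp: S_def)
        have "z = r1 \<or> z = z1"
        proof (rule reg3[of z])
          assume "z \<le> r1" then show ?thesis using U1[of z r1] z h r by simp
        next
          assume "r1 \<le> z" "z \<le> r2" then show ?thesis using U2[of z r1] z h r by simp
        next
          assume "r2 \<le> z" then show ?thesis using U3[of z z1] z z1 by simp
        qed
        then show "z \<in> {r1, z1}" by blast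
      qed
    qed
    moreover have "z1 \<noteq> r1" using z1 r by linarith
    ultimately show ?thesis by simp
  qed
  have c5: "card S = 3" if h: "g r2 < lam" "lam < g r1"
  proof -
    obtain z1 where z1: "0 < z1" "z1 \<le> r1" "g z1 = lam" using E1 h by force
    obtain z2 where z2: "r1 \<le> z2" "z2 \<le> r2" "g z2 = lam" using E2 h by force
    obtain z3 where z3: "r2 \<le> z3" "g z3 = lam" using E3 h by force
    have "z1 \<noteq> r1" using z1 h by auto
    then have d1: "z1 < z2" using z1 z2 by linarith
    have "z2 \<noteq> r2" using z2 h by auto
    moreover have "z3 \<noteq> r2" using z3 h by auto
    ultimately have d2: "z2 < z3" using z2 z3 by linarith
    have "S = {z1, z2, z3}"
    proof
      show "{z1, z2, z3} \<subseteq> S" using z1 z2 z3 d1 d2 by (simp add: S_def)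
      show "S \<subseteq> {z1, z2, z3}"
      proof
        fix z assume "z \<in> S"
        then have z: "0 < z" "g z = lam" by (auto simp: S_def)
        have "z = z1 \<or> z = z2 \<or> z = z3"
        proof (rule reg3[of z])
          assume "z \<le> r1" then show ?thesis using U1[of z z1] z z1 by simp
        next
          assume "r1 \<le> z" "z \<le> r2" then show ?thesis using U2[of z z2] z z2 by simp
        next
          assume "r2 \<le> z" then show ?thesis using U3[of z z3] z z3 by simp
        qed
        then show "z \<in> {z1, z2, z3}" by blast
      qed
    qed
    then show ?thesis using d1 d2 by simp
  qed
  show ?thesis using c1 c2 c3 c4 c5 by blast
qed

lemma count_sub:
  fixes g :: "real \<Rightarrow> real" and lam :: real
  assumes g0: "g 0 = 0" and lam: "lam > 0"
    and cont: "\<And>z. z \<ge> 0 \<Longrightarrow> isCont g z"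
    and I: "\<And>u v. 0 \<le> u \<Longrightarrow> u < v \<Longrightarrow> g u < g v"
    and unb: "\<And>y. \<exists>M\<ge>0. g M \<ge> y"
  shows "card {z. z > 0 \<and> g z = lam} = 1"
proof -
  obtain M where M: "M \<ge> 0" "g M \<ge> lam" using unb by blast
  obtain z where z: "0 \<le> z" "z \<le> M" "g z = lam" using IVT[of g 0 lam M] M g0 lam cont by force
  have z0: "z > 0" using z g0 lam by (cases "z = 0") auto
  have "{z. z > 0 \<and> g z = lam} = {z}"
  proof (auto simp: z z0)
    fix w assume "0 < w" "lam = g w"
    then show "w = z" using I[of w z] I[of z w] z by (cases w z rule: linorder_cases) auto
  qed
  then show ?thesis by simp
qed

theorem mainTheorem4:
  fixes k :: nat and lam theta :: real
  assumes "k \<ge> 2" and "lam > 0" and "theta > 1"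
  shows "(theta \<le> theta_cr k \<longrightarrow> num_tisgm k lam theta = 1) \<and>
    (theta > theta_cr k \<longrightarrow>
      (\<exists>x1 x2. x1 > 0 \<and> x2 > 0 \<and> x1 \<noteq> x2 \<and>
         {x. 2 * x ^ 2 + (4 - (theta - 1) * (real k - 1)) * x + theta + 1 = 0} = {x1, x2} \<and>
         lam_crit k theta x1 \<noteq> lam_crit k theta x2 \<and>
         (let lm = min (lam_crit k theta x1) (lam_crit k theta x2);
              lp = max (lam_crit k theta x1) (lam_crit k theta x2)
          in ((lam < lm \<or> lam > lp) \<longrightarrow> num_tisgm k lam theta = 1) \<and>
             ((lam = lm \<or> lam = lp) \<longrightarrow> num_tisgm k lam theta = 2) \<and>
             ((lm < lam \<and> lam < lp) \<longrightarrow> num_tisgm k lam theta = 3))))"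
proof -
  define a where "a = 1 + theta"
  define b where "b = a + 2 + real k * (2 - a)"
  define D where "D = b^2 - 8*a"
  define t where "t = theta - 1"
  define K where "K = real k - 1"
  have k1: "k \<ge> 1" using assms by simp
  have a2: "a > 2" using assms by (simp add: a_def)
  have tpos: "t > 0" using assms by (simp add: t_def)
  have Kpos: "K > 0" using assms by (simp add: K_def)
  have kK: "real k = K + 1" by (simp add: K_def)
  have bt: "b = 4 - t*K" by (simp add: b_def a_def t_def K_def algebra_simps)
  have Dt: "D = t * (K^2 * t - 8 * real k)"
    by (simp add: D_def bt a_def t_def kK power2_eq_square algebra_simps)
  have crit: "theta > theta_cr k \<longleftrightarrow> K^2 * t > 8 * real k"
  proof -
    have "theta_cr k = 2 * (K + 2)^2 / K^2 - 1"
      by (simp add: theta_cr_def K_def power_divide add.commute)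
    moreover have "theta > 2 * (K + 2)^2 / K^2 - 1 \<longleftrightarrow> (theta + 1) * K^2 > 2 * (K + 2)^2"
    proof -
      have "K^2 > 0" using Kpos by simp
      then have "2 * (K + 2)^2 / K^2 < theta + 1 \<longleftrightarrow> 2 * (K + 2)^2 < (theta + 1) * K^2"
        by (simp add: pos_divide_less_eq)
      then show ?thesis by linarith
    qed
    moreover have "(theta + 1) * K^2 > 2 * (K + 2)^2 \<longleftrightarrow> K^2 * t > 8 * real k"
      by (simp add: t_def kK power2_eq_square algebra_simps)
    ultimately show ?thesis by simp
  qed
  have qqb: "qq k a z = 2*a*z^2 + b*z + 1" for z by (simp add: qq_def b_def)
  have N: "num_tisgm k lam theta = card {z. z > 0 \<and> gg k a z = lam}"
    using num_char[OF k1 assms(3) assms(2)] by (simp add: a_def)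
  have coef: "4 - (theta - 1) * (real k - 1) = b" by (simp add: bt t_def K_def)
  have P1: "num_tisgm k lam theta = 1" if le: "theta \<le> theta_cr k"
  proof -
    have "D \<le> 0" using le crit Dt tpos
      by (simp add: mult_nonneg_nonpos)
    define c where "c = - b / (4 * a)"
    have qid: "qq k a z = 2*a*(z - c)^2 - D/(8*a)" for z
      using a2 unfolding qqb c_def D_def by (simp add: field_simps power2_eq_square)
    have qpos: "qq k a z > 0" if "z \<noteq> c" for z
    proof -
      have "(z - c)^2 > 0" using that by simp
      then have "2*a*(z - c)^2 > 0" using a2 by simp
      moreover have "D/(8*a) \<le> 0" using \<open>D \<le> 0\<close> a2 by (simp add: divide_nonpos_pos)
      ultimately show ?thesis unfolding qid by linarith
    qed
    have "card {z. z > 0 \<and> gg k a z = lam} = 1"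
    proof (rule count_sub)
      show "gg k a 0 = 0" by (rule gg0)
      show "lam > 0" by (rule assms(2))
      show "isCont (gg k a) z" if "z \<ge> 0" for z using gg_cont a2 that k1 by blast
      show "gg k a u < gg k a v" if "0 \<le> u" "u < v" for u v
        using gg_inc_exc[OF a2 k1 that, of c] qpos by blast
      show "\<exists>M\<ge>0. gg k a M \<ge> y" for y using gg_unb[OF a2, of 0] by simp
    qed
    then show ?thesis using N by simp
  qed
  have P2: "\<exists>x1 x2. x1 > 0 \<and> x2 > 0 \<and> x1 \<noteq> x2 \<and>
         {x. 2 * x ^ 2 + (4 - (theta - 1) * (real k - 1)) * x + theta + 1 = 0} = {x1, x2} \<and>
         lam_crit k theta x1 \<noteq> lam_crit k theta x2 \<and>
         (let lm = min (lam_crit k theta x1) (lam_crit k theta x2);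
              lp = max (lam_crit k theta x1) (lam_crit k theta x2)
          in ((lam < lm \<or> lam > lp) \<longrightarrow> num_tisgm k lam theta = 1) \<and>
             ((lam = lm \<or> lam = lp) \<longrightarrow> num_tisgm k lam theta = 2) \<and>
             ((lm < lam \<and> lam < lp) \<longrightarrow> num_tisgm k lam theta = 3))"
    if gt: "theta > theta_cr k"
  proof -
    have big: "K^2 * t > 8 * real k" using gt crit by simp
    have Dpos: "D > 0" using big Dt tpos by simp
    have e: "K * (t * K) = K^2 * t" by (simp add: power2_eq_square)
    have "K * (t * K) > K * 4" unfolding e using big Kpos kK by linarith
    then have "t * K > 4" using Kpos by simp
    then have bneg: "b < 0" using bt by simp
    define s where "s = sqrt D"
    have spos: "s > 0" using Dpos by (simp add: s_def)
    have ss: "s * s = D" using Dpos by (simp add: s_def)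
    have "D < b^2" using a2 by (simp add: D_def)
    then have "sqrt D < sqrt (b^2)" by (rule real_sqrt_less_mono)
    then have sb: "s < - b" using bneg by (simp add: s_def)
    define x1 where "x1 = (- b - s) / 4"
    define x2 where "x2 = (- b + s) / 4"
    have x1p: "x1 > 0" using sb by (simp add: x1_def)
    have x12: "x1 < x2" using spos by (simp add: x1_def x2_def)
    have x2p: "x2 > 0" using x1p x12 by simp
    have fact: "2 * X^2 + b * X + a = 2 * (X - x1) * (X - x2)" for X
    proof -
      have "2 * (X - x1) * (X - x2) = 2 * X^2 + b * X + (b * b - s * s)/8"
        by (simp add: x1_def x2_def field_simps power2_eq_square)
      also have "(b * b - s * s)/8 = a" using ss by (simp add: D_def power2_eq_square)
      finally show ?thesis by simp
    qed
    have qset: "{x. 2 * x ^ 2 + (4 - (theta - 1) * (real k - 1)) * x + theta + 1 = 0} = {x1, x2}"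
    proof -
      have "2 * x ^ 2 + (4 - (theta - 1) * (real k - 1)) * x + theta + 1 = 2 * (x - x1) * (x - x2)" for x
        using fact[of x] unfolding coef by (simp add: a_def algebra_simps)
      then show ?thesis by (simp add: set_eq_iff)
    qed
    define r1 where "r1 = x1 / a"
    define r2 where "r2 = x2 / a"
    have r1p: "r1 > 0" using x1p a2 by (simp add: r1_def)
    have r12: "r1 < r2" using x12 a2 by (simp add: r1_def r2_def divide_strict_right_mono)
    have qf: "qq k a z = 2 * a * ((z - r1) * (z - r2))" for z
    proof -
      have "a * qq k a z = 2 * (a*z)^2 + b * (a*z) + a"
        unfolding qqb by (simp add: algebra_simps power2_eq_square)
      also have "\<dots> = 2 * (a*z - x1) * (a*z - x2)" by (rule fact)
      also have "\<dots> = a * (2 * a * ((z - r1) * (z - r2)))"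
        using a2 by (simp add: r1_def r2_def field_simps)
      finally show ?thesis using a2 by simp
    qed
    have qp1: "qq k a z > 0" if "z < r1" for z
    proof -
      have "(z - r1) * (z - r2) > 0" using that r12 by (intro mult_neg_neg) auto
      then show ?thesis unfolding qf using a2 by simp
    qed
    have qn: "qq k a z < 0" if "r1 < z" "z < r2" for z
    proof -
      have "(z - r1) * (z - r2) < 0" using that by (intro mult_pos_neg) auto
      then show ?thesis unfolding qf using a2 by (simp add: mult_pos_neg)
    qed
    have qp2: "qq k a z > 0" if "r2 < z" for z
    proof -
      have "(z - r1) * (z - r2) > 0" using that r12 by (intro mult_pos_pos) auto
      then show ?thesis unfolding qf using a2 by simp
    qed
    have CS: "(lam < gg k a r2 \<or> lam > gg k a r1 \<longrightarrow> card {z. z > 0 \<and> gg k a z = lam} = 1) \<and>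
         (lam = gg k a r2 \<or> lam = gg k a r1 \<longrightarrow> card {z. z > 0 \<and> gg k a z = lam} = 2) \<and>
         (gg k a r2 < lam \<and> lam < gg k a r1 \<longrightarrow> card {z. z > 0 \<and> gg k a z = lam} = 3)"
    proof (rule count_super[of r1 r2 "gg k a" lam])
      show "0 < r1" "r1 < r2" "gg k a 0 = 0" "0 < lam" using r1p r12 gg0 assms(2) by auto
      show "isCont (gg k a) z" if "z \<ge> 0" for z using gg_cont a2 that k1 by blast
      show "gg k a u < gg k a v" if "0 \<le> u" "u < v" "v \<le> r1" for u v
        using that qp1 by (intro gg_inc0[OF a2 k1]) auto
      show "gg k a u > gg k a v" if "r1 \<le> u" "u < v" "v \<le> r2" for u v
        using that qn r1p by (intro gg_dec0[OF a2 k1]) auto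
      show "gg k a u < gg k a v" if "r2 \<le> u" "u < v" for u v
        using that qp2 r1p r12 by (intro gg_inc0[OF a2 k1]) auto
      show "\<exists>M\<ge>r2. gg k a M \<ge> y" for y using gg_unb[OF a2, of r2] r1p r12 by simp
    qed
    have LU: "gg k a r2 < gg k a r1"
      using qn r1p r12 by (intro gg_dec0[OF a2 k1]) auto
    have l1: "lam_crit k theta x1 = gg k a r1"
      using lam_crit_gg[OF assms(3) x1p] by (simp add: a_def r1_def)
    have l2: "lam_crit k theta x2 = gg k a r2"
      using lam_crit_gg[OF assms(3) x2p] by (simp add: a_def r2_def)
    have mn: "min (gg k a r1) (gg k a r2) = gg k a r2" using LU by simp
    have mx: "max (gg k a r1) (gg k a r2) = gg k a r1" using LU by simp
    have ne: "gg k a r1 \<noteq> gg k a r2" using LU by simp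
    have x12': "x1 \<noteq> x2" using x12 by simp
    show ?thesis
      apply (rule exI[of _ x1], rule exI[of _ x2])
      apply (unfold l1 l2 mn mx Let_def N)
      apply (intro conjI x1p x2p x12' qset ne)
      using CS by blast+
  qed
  show ?thesis using P1 P2 by blast
qed

end
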